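(* In the stochastic epidemic model described in the context (fixed population size $n$), for each $i,j\in[m]$ and $t\ge0$ let $\chi_{ij}=\chi_{ij}(t,\mathcal S,\mathcal I):=\mathbb{E}[1_{(a,b)}(t)\mid\mathcal S(t),\mathcal I(t)]=\Pr((a,b)\in E(t)\mid\mathcal S(t),\mathcal I(t))$ be the random variable giving the conditional probability that a pair of nodes $(a,b)\in\mathcal S_i(t)\times\mathcal I_j(t)$ is in contact at time $t$ given $(\mathcal S(t),\mathcal I(t))$. Then for all $t\ge0$ and $i\in[m]$ (with $'$ denoting the time derivative): (i) $\mathbb E[s_i]'=-\sum_{j=1}^m B_{ij}\mathbb E[n\chi_{ij}s_i\beta_j]$; (ii) $\mathbb E[\beta_i]'=\sum_{j=1}^m B_{ij}\mathbb E[n\chi_{ij}s_i\beta_j]-\gamma_i\mathbb E[\beta_i]$; (iii) $\mathbb E[s_i^2]'=-\sum_{j=1}^m\big(2B_{ij}\mathbb E[n\chi_{ij}s_i^2\beta_j]-B_{ij}\mathbb E[n\chi_{ij}s_i\beta_j]/n\big)$; (iv) $\mathbb E[\beta_i^2]'=\sum_{j=1}^m B_{ij}\big(2\mathbb E[n\chi_{ij}s_i\beta_j\beta_i]+\mathbb E[n\chi_{ij}s_i\beta_j]/n\big)-\gamma_i\big(2\mathbb E[\beta_i^2]-\mathbb E[\beta_i]/n\big)$.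
   Context: Stochastic epidemic model with population size $n$: node set $[n]$ partitioned into age groups $\mathcal A_1,\dots,\mathcal A_m$; parameters $B_{ij}\ge0$, $\rho_{ij}>0$ with $\rho_{ij}/n\le1$, $\gamma_i>0$, $\lambda>0$. A state consists of disease states $x_a\in\{0,1,-1\}$ (susceptible, infected, recovered), edge states $1_{(a,b)}\in\{0,1\}$ for ordered pairs of distinct nodes ($1$ = directed edge from $b$ to $a$), and auxiliary bits flipped at each update of a pair's edge state. With $\mathcal S_i(\mathbf x),\mathcal I_i(\mathbf x)$ the susceptible/infected nodes of $\mathcal A_i$ and $E_k^{(a)}(\mathbf x)=\sum_{c\in\mathcal I_k(\mathbf x)}1_{(a,c)}(\mathbf x)$, $\{\mathbf X(t)\}$ is a right-continuous time-homogeneous continuous-time Markov chain with only these transitions: susceptible $a\in\mathcal A_i$ becomes infected at rate $\sum_kB_{ik}E_k^{(a)}(\mathbf x)$; infected $a\in\mathcal A_i$ recovers at rate $\gamma_i$; the edge state of $(a,b)\in\mathcal A_i\times\mathcal A_j$ is updated to $1$ at rate $\lambda\rho_{ij}/n$ and to $0$ at rate $\lambda(1-\rho_{ij}/n)$ (auxiliary bit flipped each time). Notation: $\mathcal S_i(t)=\mathcal S_i(\mathbf X(t))$, $\mathcal I_i(t)=\mathcal I_i(\mathbf X(t))$, $\mathcal S(t)=\cup_i\mathcal S_i(t)$, $\mathcal I(t)=\cup_i\mathcal I_i(t)$, $E(t)$ the set of present edges, $1_{(a,b)}(t)=1_{(a,b)}(\mathbf X(t))$, $s_i=s_i(t)=|\mathcal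 S_i(t)|/n$, $\beta_i=\beta_i(t)=|\mathcal I_i(t)|/n$. The paper treats $\chi_{ij}$ as not depending on the particular pair $(a,b)\in\mathcal S_i(t)\times\mathcal I_j(t)$; when $\mathcal S_i(t)$ or $\mathcal I_j(t)$ is empty the products $s_i\beta_j$ vanish so the value of $\chi_{ij}$ there is immaterial. *)

theory Defs
  imports "HOL-Probability.Probability"
begin

text \<open>A state is a triple (d, e, u):
  d a : disease state of node a (0 susceptible, 1 infected, -1 recovered),
  e a b : edge state of the ordered pair (a,b) (True = directed edge from b to a),
  u a b : auxiliary bit of the pair (a,b), flipped at every update of its edge state.
  Nodes are 0,...,n-1; age groups are 0,...,m-1, node a belongs to group grp a.\<close>

type_synonym state = "(nat \<Rightarrow> int) \<times> (nat \<Rightarrow> nat \<Rightarrow> bool) \<times> (nat \<Rightarrow> nat \<Rightarrow> bool)"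

definition dis :: "state \<Rightarrow> nat \<Rightarrow> int" where "dis x = fst x"
definition edge :: "state \<Rightarrow> nat \<Rightarrow> nat \<Rightarrow> bool" where "edge x = fst (snd x)"
definition auxb :: "state \<Rightarrow> nat \<Rightarrow> nat \<Rightarrow> bool" where "auxb x = snd (snd x)"

definition states :: "nat \<Rightarrow> state set" where
  "states n = {x. (\<forall>a. dis x a \<in> {-1, 0, 1}) \<and> (\<forall>a. n \<le> a \<longrightarrow> dis x a = 0) \<and>
      (\<forall>a b. (edge x a b \<or> auxb x a b) \<longrightarrow> a < n \<and> b < n \<and> a \<noteq> b)}"

definition Sg :: "nat \<Rightarrow> (nat \<Rightarrow> nat) \<Rightarrow> nat \<Rightarrow> state \<Rightarrow> nat set" where
  "Sg n grp i x = {a. a < n \<and> grp a = i \<and> dis x a = 0}"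
definition Ig :: "nat \<Rightarrow> (nat \<Rightarrow> nat) \<Rightarrow> nat \<Rightarrow> state \<Rightarrow> nat set" where
  "Ig n grp i x = {a. a < n \<and> grp a = i \<and> dis x a = 1}"
definition Sall :: "nat \<Rightarrow> state \<Rightarrow> nat set" where
  "Sall n x = {a. a < n \<and> dis x a = 0}"
definition Iall :: "nat \<Rightarrow> state \<Rightarrow> nat set" where
  "Iall n x = {a. a < n \<and> dis x a = 1}"

definition Eind :: "nat \<Rightarrow> (nat \<Rightarrow> nat) \<Rightarrow> nat \<Rightarrow> nat \<Rightarrow> state \<Rightarrow> real" where
  "Eind n grp k a x = (\<Sum>c\<in>Ig n grp k x. if edge x a c then 1 else 0)"

definition sfrac :: "nat \<Rightarrow> (nat \<Rightarrow> nat) \<Rightarrow> nat \<Rightarrow> state \<Rightarrow> real" where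
  "sfrac n grp i x = real (card (Sg n grp i x)) / real n"
definition bfrac :: "nat \<Rightarrow> (nat \<Rightarrow> nat) \<Rightarrow> nat \<Rightarrow> state \<Rightarrow> real" where
  "bfrac n grp i x = real (card (Ig n grp i x)) / real n"

definition set_dis :: "state \<Rightarrow> nat \<Rightarrow> int \<Rightarrow> state" where
  "set_dis x a v = ((dis x)(a := v), edge x, auxb x)"
definition upd_edge :: "state \<Rightarrow> nat \<Rightarrow> nat \<Rightarrow> bool \<Rightarrow> state" where
  "upd_edge x a b v = (dis x, (edge x)(a := (edge x a)(b := v)),
                        (auxb x)(a := (auxb x a)(b := \<not> auxb x a b)))"

definition qrate :: "nat \<Rightarrow> nat \<Rightarrow> (nat \<Rightarrow> nat) \<Rightarrow> (nat \<Rightarrow> nat \<Rightarrow> real) \<Rightarrow> (nat \<Rightarrow> nat \<Rightarrow> real)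
     \<Rightarrow> (nat \<Rightarrow> real) \<Rightarrow> real \<Rightarrow> state \<Rightarrow> state \<Rightarrow> real" where
  "qrate n m grp B \<rho> \<gamma> lam x y =
     (\<Sum>a<n. if dis x a = 0 \<and> y = set_dis x a 1
              then (\<Sum>k<m. B (grp a) k * Eind n grp k a x) else 0)
   + (\<Sum>a<n. if dis x a = 1 \<and> y = set_dis x a (-1) then \<gamma> (grp a) else 0)
   + (\<Sum>a<n. \<Sum>b<n. if a \<noteq> b then
          (if y = upd_edge x a b True then lam * \<rho> (grp a) (grp b) / real n else 0)
        + (if y = upd_edge x a b False then lam * (1 - \<rho> (grp a) (grp b) / real n) else 0)
        else 0)"

definition totrate :: "nat \<Rightarrow> nat \<Rightarrow> (nat \<Rightarrow> nat) \<Rightarrow> (nat \<Rightarrow> nat \<Rightarrow> real) \<Rightarrow> (nat \<Rightarrow> nat \<Rightarrow> real)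
     \<Rightarrow> (nat \<Rightarrow> real) \<Rightarrow> real \<Rightarrow> state \<Rightarrow> real" where
  "totrate n m grp B \<rho> \<gamma> lam x =
     (\<Sum>a<n. if dis x a = 0 then (\<Sum>k<m. B (grp a) k * Eind n grp k a x) else 0)
   + (\<Sum>a<n. if dis x a = 1 then \<gamma> (grp a) else 0)
   + (\<Sum>a<n. \<Sum>b<n. if a \<noteq> b then
          lam * \<rho> (grp a) (grp b) / real n + lam * (1 - \<rho> (grp a) (grp b) / real n) else 0)"

definition generator :: "nat \<Rightarrow> nat \<Rightarrow> (nat \<Rightarrow> nat) \<Rightarrow> (nat \<Rightarrow> nat \<Rightarrow> real) \<Rightarrow> (nat \<Rightarrow> nat \<Rightarrow> real)
     \<Rightarrow> (nat \<Rightarrow> real) \<Rightarrow> real \<Rightarrow> state \<Rightarrow> state \<Rightarrow> real" where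
  "generator n m grp B \<rho> \<gamma> lam x y =
     (if x = y then - totrate n m grp B \<rho> \<gamma> lam x else qrate n m grp B \<rho> \<gamma> lam x y)"

definition ctmc :: "'w measure \<Rightarrow> (real \<Rightarrow> 'w \<Rightarrow> 's) \<Rightarrow> 's set \<Rightarrow> ('s \<Rightarrow> 's \<Rightarrow> real) \<Rightarrow> bool" where
  "ctmc M X S Q \<longleftrightarrow> prob_space M \<and> finite S \<and>
     (\<forall>t\<ge>0. X t \<in> measurable M (count_space UNIV)) \<and>
     (\<forall>t\<ge>0. \<forall>\<omega>\<in>space M. X t \<omega> \<in> S) \<and>
     (\<forall>\<omega>\<in>space M. \<forall>t\<ge>0. \<exists>\<delta>>0. \<forall>s. t \<le> s \<and> s < t + \<delta> \<longrightarrow> X s \<omega> = X t \<omega>) \<and>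
     (\<exists>P :: real \<Rightarrow> 's \<Rightarrow> 's \<Rightarrow> real.
        (\<forall>x\<in>S. \<forall>y\<in>S. ((\<lambda>h. (P h x y - (if x = y then 1 else 0)) / h) \<longlongrightarrow> Q x y) (at_right 0)) \<and>
        (\<forall>(k::nat) (s::nat \<Rightarrow> real) (z::nat \<Rightarrow> 's) t h x y.
            0 \<le> t \<and> 0 \<le> h \<and> (\<forall>i<k. 0 \<le> s i \<and> s i \<le> t) \<longrightarrow>
            measure M {\<omega>\<in>space M. X (t + h) \<omega> = y \<and> X t \<omega> = x \<and> (\<forall>i<k. X (s i) \<omega> = z i)}
              = P h x y * measure M {\<omega>\<in>space M. X t \<omega> = x \<and> (\<forall>i<k. X (s i) \<omega> = z i)}))"

definition cond_edge :: "'w measure \<Rightarrow> (real \<Rightarrow> 'w \<Rightarrow> state) \<Rightarrow> nat \<Rightarrow> real \<Rightarrow> nat \<Rightarrow> nat \<Rightarrow> 'w \<Rightarrow> real" where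
  "cond_edge M X n t a b \<omega> =
     measure M {\<omega>'\<in>space M. edge (X t \<omega>') a b \<and>
        Sall n (X t \<omega>') = Sall n (X t \<omega>) \<and> Iall n (X t \<omega>') = Iall n (X t \<omega>)}
   / measure M {\<omega>'\<in>space M. Sall n (X t \<omega>') = Sall n (X t \<omega>) \<and> Iall n (X t \<omega>') = Iall n (X t \<omega>)}"

end

theory Submission
  imports Defs
begin


lemma simple_integral:
  fixes W :: "'w \<Rightarrow> 'a" and F :: "'a \<Rightarrow> real"
  assumes M: "prob_space M" and V: "finite V" and WV: "\<forall>\<omega>\<in>space M. W \<omega> \<in> V"
    and meas: "\<And>v. {\<omega>\<in>space M. W \<omega> = v} \<in> sets M"
  shows "(LINT \<omega>|M. F (W \<omega>)) = (\<Sum>v\<in>V. F v * measure M {\<omega>\<in>space M. W \<omega> = v})"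
proof -
  interpret prob_space M by fact
  have "(LINT \<omega>|M. F (W \<omega>)) = (LINT \<omega>|M. (\<Sum>v\<in>V. F v * indicator {\<omega>\<in>space M. W \<omega> = v} \<omega>))"
  proof (rule Bochner_Integration.integral_cong[OF refl])
    fix \<omega> assume w: "\<omega> \<in> space M"
    have "(\<Sum>v\<in>V. F v * indicator {\<omega>\<in>space M. W \<omega> = v} \<omega>) = (\<Sum>v\<in>V. if v = W \<omega> then F v else 0)"
      by (rule sum.cong) (auto simp: indicator_def w)
    also have "\<dots> = F (W \<omega>)" using WV w V by (simp add: sum.delta')
    finally show "F (W \<omega>) = (\<Sum>v\<in>V. F v * indicator {\<omega>\<in>space M. W \<omega> = v} \<omega>)" by simp
  qed
  also have "\<dots> = (\<Sum>v\<in>V. LINT \<omega>|M. F v * indicator {\<omega>\<in>space M. W \<omega> = v} \<omega>)"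
    by (rule Bochner_Integration.integral_sum) (auto intro!: integrable_real_indicator meas simp: less_top[symmetric])
  also have "\<dots> = (\<Sum>v\<in>V. F v * measure M {\<omega>\<in>space M. W \<omega> = v})"
    by (rule sum.cong) (auto simp: Int_absorb2)
  finally show ?thesis .
qed

lemma measure_as_sum:
  fixes W :: "'w \<Rightarrow> 'a"
  assumes M: "prob_space M" and V: "finite V" and WV: "\<forall>\<omega>\<in>space M. W \<omega> \<in> V"
    and meas: "\<And>v. {\<omega>\<in>space M. W \<omega> = v} \<in> sets M"
  shows "measure M {\<omega>\<in>space M. Q (W \<omega>)} = (\<Sum>v\<in>V. (if Q v then 1 else 0) * measure M {\<omega>\<in>space M. W \<omega> = v})"
proof -
  have "measure M {\<omega>\<in>space M. Q (W \<omega>)} = (LINT \<omega>|M. indicator {\<omega>\<in>space M. Q (W \<omega>)} \<omega>)"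
    by (simp add: Int_absorb2)
  also have "\<dots> = (LINT \<omega>|M. (\<lambda>v. if Q v then 1 else 0) (W \<omega>))"
    by (rule Bochner_Integration.integral_cong) (auto simp: indicator_def)
  also have "\<dots> = (\<Sum>v\<in>V. (if Q v then 1 else 0) * measure M {\<omega>\<in>space M. W \<omega> = v})"
    by (rule simple_integral[OF assms])
  finally show ?thesis .
qed

lemma kolmo:
  fixes f :: "'s \<Rightarrow> real"
  assumes ch: "ctmc M X S Q" and t: "0 \<le> t"
  shows "((\<lambda>\<tau>. LINT \<omega>|M. f (X \<tau> \<omega>)) has_real_derivative
           (LINT \<omega>|M. (\<Sum>y\<in>S. Q (X t \<omega>) y * f y))) (at t within {0..})"
proof -
  have M: "prob_space M" and fin: "finite S" and meas: "\<forall>t\<ge>0. X t \<in> measurable M (count_space UNIV)"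
    and XS: "\<forall>t\<ge>0. \<forall>\<omega>\<in>space M. X t \<omega> \<in> S"
    using ch unfolding ctmc_def by blast+
  obtain P :: "real \<Rightarrow> 's \<Rightarrow> 's \<Rightarrow> real" where
    lim: "\<forall>x\<in>S. \<forall>y\<in>S. ((\<lambda>h. (P h x y - (if x = y then 1 else 0)) / h) \<longlongrightarrow> Q x y) (at_right 0)" and
    mk: "\<forall>(k::nat) (s::nat \<Rightarrow> real) (z::nat \<Rightarrow> 's) t h x y.
            0 \<le> t \<and> 0 \<le> h \<and> (\<forall>i<k. 0 \<le> s i \<and> s i \<le> t) \<longrightarrow>
            measure M {\<omega>\<in>space M. X (t + h) \<omega> = y \<and> X t \<omega> = x \<and> (\<forall>i<k. X (s i) \<omega> = z i)}
              = P h x y * measure M {\<omega>\<in>space M. X t \<omega> = x \<and> (\<forall>i<k. X (s i) \<omega> = z i)}"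
    using ch unfolding ctmc_def by blast
  interpret prob_space M by (rule M)
  define p where "p \<tau> x = measure M {\<omega>\<in>space M. X \<tau> \<omega> = x}" for \<tau> x
  define d :: "'s \<Rightarrow> 's \<Rightarrow> real" where "d x y = (if x = y then 1 else 0)" for x y
  define R where "R h z = (\<Sum>x\<in>S. ((P h z x - d z x) / h) * f x)" for h z
  define Qf where "Qf z = (\<Sum>x\<in>S. Q z x * f x)" for z
  have ms: "{\<omega>\<in>space M. A (X \<tau> \<omega>)} \<in> sets M" if "\<tau> \<ge> 0" for \<tau> A
  proof -
    have "{\<omega>\<in>space M. A (X \<tau> \<omega>)} = X \<tau> -` {x. A x} \<inter> space M" by auto
    then show ?thesis using measurable_sets[of "X \<tau>" M "count_space UNIV" "{x. A x}"] meas that by auto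
  qed
  have ms2: "{\<omega>\<in>space M. X \<tau>' \<omega> = y \<and> X \<tau> \<omega> = x} \<in> sets M" if "\<tau> \<ge> 0" "\<tau>' \<ge> 0" for \<tau> \<tau>' x y
  proof -
    have "{\<omega>\<in>space M. X \<tau>' \<omega> = y \<and> X \<tau> \<omega> = x} = {\<omega>\<in>space M. X \<tau>' \<omega> = y} \<inter> {\<omega>\<in>space M. X \<tau> \<omega> = x}" by auto
    then show ?thesis using ms[of \<tau>' "\<lambda>v. v = y"] ms[of \<tau> "\<lambda>v. v = x"] that by auto
  qed
  have g: "(LINT \<omega>|M. F (X \<tau> \<omega>)) = (\<Sum>x\<in>S. F x * p \<tau> x)" if "\<tau> \<ge> 0" for \<tau> F
    unfolding p_def by (rule simple_integral[OF M fin]) (use XS that ms in auto)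
  have p0: "0 \<le> p \<tau> x" and p1: "p \<tau> x \<le> 1" for \<tau> x unfolding p_def by auto
  have step: "p (\<tau>+h) y = (\<Sum>x\<in>S. P h x y * p \<tau> x)" if "\<tau> \<ge> 0" "h \<ge> 0" for \<tau> h y
  proof -
    have "{\<omega>\<in>space M. X (\<tau>+h) \<omega> = y} = (\<Union>x\<in>S. {\<omega>\<in>space M. X (\<tau>+h) \<omega> = y \<and> X \<tau> \<omega> = x})"
      using XS that by auto
    then have "p (\<tau>+h) y = (\<Sum>x\<in>S. measure M {\<omega>\<in>space M. X (\<tau>+h) \<omega> = y \<and> X \<tau> \<omega> = x})"
      unfolding p_def
      apply simp
      apply (rule finite_measure_finite_Union[OF fin])
      using ms2 that
       apply (auto simp: disjoint_family_on_def)
      done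
    also have "\<dots> = (\<Sum>x\<in>S. P h x y * p \<tau> x)"
    proof (rule sum.cong[OF refl])
      fix x
      show "measure M {\<omega>\<in>space M. X (\<tau>+h) \<omega> = y \<and> X \<tau> \<omega> = x} = P h x y * p \<tau> x"
        using mk[rule_format, of \<tau> h 0] that unfolding p_def by simp
    qed
    finally show ?thesis .
  qed
  have ident: "(\<Sum>x\<in>S. f x * p (\<tau>+h) x) - (\<Sum>x\<in>S. f x * p \<tau> x) = h * (\<Sum>z\<in>S. p \<tau> z * R h z)"
    if "\<tau> \<ge> 0" "h > 0" for \<tau> h
  proof -
    have "(\<Sum>x\<in>S. f x * p (\<tau>+h) x) = (\<Sum>x\<in>S. f x * (\<Sum>z\<in>S. P h z x * p \<tau> z))"
      using that by (simp add: step)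
    also have "\<dots> = (\<Sum>x\<in>S. \<Sum>z\<in>S. p \<tau> z * P h z x * f x)"
      by (simp add: sum_distrib_left mult_ac)
    also have "\<dots> = (\<Sum>z\<in>S. \<Sum>x\<in>S. p \<tau> z * P h z x * f x)"
      by (rule sum.swap)
    finally have A: "(\<Sum>x\<in>S. f x * p (\<tau>+h) x) = (\<Sum>z\<in>S. \<Sum>x\<in>S. p \<tau> z * P h z x * f x)" .
    have B: "(\<Sum>x\<in>S. f x * p \<tau> x) = (\<Sum>z\<in>S. \<Sum>x\<in>S. p \<tau> z * d z x * f x)"
    proof (rule sum.cong[OF refl])
      fix z assume z: "z \<in> S"
      have "(\<Sum>x\<in>S. p \<tau> z * d z x * f x) = (\<Sum>x\<in>S. if z = x then p \<tau> z * f x else 0)"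
        by (rule sum.cong) (auto simp: d_def)
      also have "\<dots> = f z * p \<tau> z" using z fin by simp
      finally show "f z * p \<tau> z = (\<Sum>x\<in>S. p \<tau> z * d z x * f x)" by simp
    qed
    have C: "h * (\<Sum>z\<in>S. p \<tau> z * R h z) = (\<Sum>z\<in>S. \<Sum>x\<in>S. p \<tau> z * P h z x * f x) - (\<Sum>z\<in>S. \<Sum>x\<in>S. p \<tau> z * d z x * f x)"
      unfolding R_def sum_subtractf[symmetric] sum_distrib_left
      by (rule sum.cong[OF refl], rule sum.cong[OF refl]) (use that in \<open>simp add: field_simps\<close>)
    show ?thesis unfolding A B C ..
  qed
  define F where "F = at t within {0::real..}"
  have Plim: "((\<lambda>h. P h z x - d z x) \<longlongrightarrow> 0) (at_right 0)" if "z \<in> S" "x \<in> S" for z x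
  proof -
    have "((\<lambda>h. (P h z x - d z x) / h * h) \<longlongrightarrow> Q z x * 0) (at_right 0)"
      using lim that unfolding d_def by (intro tendsto_mult tendsto_ident_at) auto
    moreover have "\<forall>\<^sub>F h in at_right 0. (P h z x - d z x) / h * h = P h z x - d z x"
      by (simp add: eventually_at_filter)
    ultimately show ?thesis by (simp add: Lim_transform_eventually)
  qed
  have Rlim: "((\<lambda>h. R h z) \<longlongrightarrow> Qf z) (at_right 0)" if "z \<in> S" for z
    unfolding R_def Qf_def using lim that unfolding d_def by (intro tendsto_sum tendsto_mult_right) auto
  have absl: "filterlim (\<lambda>y. \<bar>y - t\<bar>) (at_right 0) F"
  proof -
    have "((\<lambda>y. y - t) \<longlongrightarrow> t - t) F" unfolding F_def by (intro tendsto_diff tendsto_ident_at tendsto_const)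
    then have "((\<lambda>y. \<bar>y - t\<bar>) \<longlongrightarrow> 0) F" using tendsto_rabs_zero by fastforce
    moreover have "\<forall>\<^sub>F y in F. \<bar>y - t\<bar> \<in> {0<..} \<and> \<bar>y - t\<bar> \<noteq> 0"
      unfolding F_def by (simp add: eventually_at_filter)
    ultimately show ?thesis by (simp add: filterlim_at)
  qed
  have pmin: "((\<lambda>y. p (min y t) x) \<longlongrightarrow> p t x) F" if x: "x \<in> S" for x
  proof -
    have bound0: "((\<lambda>y. \<Sum>z\<in>S. \<bar>P \<bar>y - t\<bar> z x - d z x\<bar>) \<longlongrightarrow> 0) F"
    proof -
      have "((\<lambda>y. \<Sum>z\<in>S. \<bar>P \<bar>y - t\<bar> z x - d z x\<bar>) \<longlongrightarrow> (\<Sum>z\<in>S. 0)) F"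
      proof (intro tendsto_sum)
        fix z assume z: "z \<in> S"
        have "((\<lambda>y. P \<bar>y - t\<bar> z x - d z x) \<longlongrightarrow> 0) F"
          using filterlim_compose[OF Plim[OF z x] absl] .
        then show "((\<lambda>y. \<bar>P \<bar>y - t\<bar> z x - d z x\<bar>) \<longlongrightarrow> 0) F" using tendsto_rabs_zero by fastforce
      qed
      then show ?thesis by simp
    qed
    have ev: "\<forall>\<^sub>F y in F. norm (p (min y t) x - p t x) \<le> (\<Sum>z\<in>S. \<bar>P \<bar>y - t\<bar> z x - d z x\<bar>)"
      unfolding F_def eventually_at_filter
    proof (rule always_eventually, intro allI impI)
      fix y :: real assume "y \<noteq> t" "y \<in> {0..}"
      then have y: "0 \<le> y" by auto
      show "norm (p (min y t) x - p t x) \<le> (\<Sum>z\<in>S. \<bar>P \<bar>y - t\<bar> z x - d z x\<bar>)"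
      proof (cases "t \<le> y")
        case True then show ?thesis by (simp add: sum_nonneg)
      next
        case False
        have "p t x = p (y + (t - y)) x" by simp
        also have "\<dots> = (\<Sum>z\<in>S. P (t - y) z x * p y z)" using step[of y "t - y" x] y False by simp
        finally have pt: "p t x = (\<Sum>z\<in>S. P (t - y) z x * p y z)" .
        have py: "p y x = (\<Sum>z\<in>S. d z x * p y z)"
        proof -
          have "(\<Sum>z\<in>S. d z x * p y z) = (\<Sum>z\<in>S. if z = x then p y z else 0)"
            by (rule sum.cong) (auto simp: d_def)
          also have "\<dots> = p y x" using x fin by simp
          finally show ?thesis by simp
        qed
        have "norm (p (min y t) x - p t x) = \<bar>\<Sum>z\<in>S. (d z x - P (t - y) z x) * p y z\<bar>"
          using False by (simp add: pt py sum_subtractf[symmetric] left_diff_distrib)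
        also have "\<dots> \<le> (\<Sum>z\<in>S. \<bar>(d z x - P (t - y) z x) * p y z\<bar>)" by (rule sum_abs)
        also have "\<dots> \<le> (\<Sum>z\<in>S. \<bar>P \<bar>y - t\<bar> z x - d z x\<bar>)"
        proof (rule sum_mono)
          fix z
          have "\<bar>(d z x - P (t - y) z x) * p y z\<bar> = \<bar>P (t - y) z x - d z x\<bar> * p y z"
            using p0[of y z] by (simp add: abs_mult abs_minus_commute)
          also have "\<dots> \<le> \<bar>P (t - y) z x - d z x\<bar>"
            using p1[of y z] by (simp add: mult_left_le)
          finally show "\<bar>(d z x - P (t - y) z x) * p y z\<bar> \<le> \<bar>P \<bar>y - t\<bar> z x - d z x\<bar>"
            using False by simp
        qed
        finally show ?thesis .
      qed
    qed
    have "((\<lambda>y. p (min y t) x - p t x) \<longlongrightarrow> 0) F"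
      by (rule Lim_null_comparison[OF ev bound0])
    then show ?thesis by (rule LIM_zero_cancel)
  qed
  define K where "K y = (\<Sum>x\<in>S. p (min y t) x * R \<bar>y - t\<bar> x)" for y
  have Klim: "(K \<longlongrightarrow> (\<Sum>x\<in>S. p t x * Qf x)) F"
    unfolding K_def
  proof (intro tendsto_sum tendsto_mult)
    fix x assume x: "x \<in> S"
    show "((\<lambda>y. p (min y t) x) \<longlongrightarrow> p t x) F" by (rule pmin[OF x])
    show "((\<lambda>y. R \<bar>y - t\<bar> x) \<longlongrightarrow> Qf x) F" using filterlim_compose[OF Rlim[OF x] absl] .
  qed
  define G where "G \<tau> = (LINT \<omega>|M. f (X \<tau> \<omega>))" for \<tau>
  have Geq: "\<forall>\<^sub>F y in F. K y = (G y - G t) / (y - t)"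
    unfolding F_def eventually_at_filter
  proof (rule always_eventually, intro allI impI)
    fix y :: real assume yt: "y \<noteq> t" "y \<in> {0..}"
    then have y: "0 \<le> y" by auto
    show "K y = (G y - G t) / (y - t)"
    proof (cases "t < y")
      case True
      have "G y - G t = (\<Sum>x\<in>S. f x * p (t + (y - t)) x) - (\<Sum>x\<in>S. f x * p t x)"
        unfolding G_def using g[of y f] g[of t f] t y by simp
      also have "\<dots> = (y - t) * (\<Sum>z\<in>S. p t z * R (y - t) z)" using ident[of t "y - t"] t True by simp
      finally show ?thesis using True unfolding K_def by simp
    next
      case False
      then have lt: "y < t" using yt by simp
      have "G t - G y = (\<Sum>x\<in>S. f x * p (y + (t - y)) x) - (\<Sum>x\<in>S. f x * p y x)"
        unfolding G_def using g[of y f] g[of t f] t y by simp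
      also have "\<dots> = (t - y) * (\<Sum>z\<in>S. p y z * R (t - y) z)" using ident[of y "t - y"] y lt by simp
      finally have "G t - G y = (t - y) * (\<Sum>z\<in>S. p y z * R (t - y) z)" .
      moreover have "(G y - G t) / (y - t) = (G t - G y) / (t - y)"
        by (simp add: divide_simps) argo
      ultimately show ?thesis using lt unfolding K_def by simp
    qed
  qed
  have "((\<lambda>y. (G y - G t) / (y - t)) \<longlongrightarrow> (\<Sum>x\<in>S. p t x * Qf x)) F"
    by (rule Lim_transform_eventually[OF Klim Geq])
  moreover have "(LINT \<omega>|M. (\<Sum>y\<in>S. Q (X t \<omega>) y * f y)) = (\<Sum>x\<in>S. p t x * Qf x)"
    using g[of t Qf] t unfolding Qf_def by (simp add: mult.commute)
  ultimately show ?thesis unfolding has_field_derivative_iff F_def G_def by simp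
qed

lemma dis_simps[simp]: "dis (d, e, u) = d" "edge (d, e, u) = e" "auxb (d, e, u) = u"
  by (simp_all add: dis_def edge_def auxb_def)

lemma dis_set_dis[simp]: "dis (set_dis x a v) = (dis x)(a := v)" "edge (set_dis x a v) = edge x"
  "auxb (set_dis x a v) = auxb x"
  by (simp_all add: set_dis_def)

lemma dis_upd_edge[simp]: "dis (upd_edge x a b v) = dis x"
  by (simp add: upd_edge_def)

lemma mem_set_dis:
  assumes x: "x \<in> states n" and a: "a < n" and v: "v \<in> {-1,0,1}" and ne: "dis x a \<noteq> v"
  shows "set_dis x a v \<in> states n - {x}"
proof -
  have "set_dis x a v \<noteq> x"
  proof
    assume "set_dis x a v = x"
    then have "dis (set_dis x a v) a = dis x a" by simp
    with ne show False by simp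
  qed
  moreover have "set_dis x a v \<in> states n" using x a v by (auto simp: states_def)
  ultimately show ?thesis by simp
qed

lemma mem_upd_edge:
  assumes x: "x \<in> states n" and a: "a < n" and b: "b < n" and ab: "a \<noteq> b"
  shows "upd_edge x a b v \<in> states n - {x}"
proof -
  have "upd_edge x a b v \<noteq> x"
  proof
    assume "upd_edge x a b v = x"
    then have "auxb (upd_edge x a b v) a b = auxb x a b" by simp
    then show False by (simp add: upd_edge_def auxb_def)
  qed
  moreover have "upd_edge x a b v \<in> states n" using x a b ab
    by (auto simp: states_def upd_edge_def edge_def auxb_def dis_def)
  ultimately show ?thesis by simp
qed

lemma sum_if_eq:
  fixes f :: "'a \<Rightarrow> real"
  assumes "finite A" "P \<Longrightarrow> T \<in> A"
  shows "(\<Sum>y\<in>A. (if P \<and> y = T then c else 0) * f y) = (if P then c * f T else 0)"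
proof (cases P)
  case True
  have "(\<Sum>y\<in>A. (if P \<and> y = T then c else 0) * f y) = (\<Sum>y\<in>A. if y = T then c * f y else 0)"
    by (rule sum.cong) (auto simp: True)
  also have "\<dots> = c * f T" using assms True by simp
  finally show ?thesis using True by simp
qed simp

lemma if_mult: "(if P then a else 0) * (c::real) = (if P then a * c else 0)" by simp

lemma gen_formula:
  fixes f :: "state \<Rightarrow> real"
  assumes fin: "finite (states n)" and x: "x \<in> states n"
    and finv: "\<forall>x a b v. f (upd_edge x a b v) = f x"
  shows "(\<Sum>y\<in>states n. generator n m grp B \<rho> \<gamma> lam x y * f y) =
     (\<Sum>a<n. if dis x a = 0 then (\<Sum>k<m. B (grp a) k * Eind n grp k a x) * (f (set_dis x a 1) - f x) else 0)
   + (\<Sum>a<n. if dis x a = 1 then \<gamma> (grp a) * (f (set_dis x a (-1)) - f x) else 0)"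
proof -
  define S where "S = states n - {x}"
  have finS: "finite S" using fin unfolding S_def by simp
  define r where "r a = (\<Sum>k<m. B (grp a) k * Eind n grp k a x)" for a
  define c1 where "c1 a b = lam * \<rho> (grp a) (grp b) / real n" for a b
  define c2 where "c2 a b = lam * (1 - \<rho> (grp a) (grp b) / real n)" for a b
  have split: "(\<Sum>y\<in>states n. generator n m grp B \<rho> \<gamma> lam x y * f y) =
      - totrate n m grp B \<rho> \<gamma> lam x * f x + (\<Sum>y\<in>S. qrate n m grp B \<rho> \<gamma> lam x y * f y)"
  proof -
    have "(\<Sum>y\<in>states n. generator n m grp B \<rho> \<gamma> lam x y * f y) =
        generator n m grp B \<rho> \<gamma> lam x x * f x + (\<Sum>y\<in>S. generator n m grp B \<rho> \<gamma> lam x y * f y)"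
      unfolding S_def using fin x by (rule sum.remove)
    also have "(\<Sum>y\<in>S. generator n m grp B \<rho> \<gamma> lam x y * f y) = (\<Sum>y\<in>S. qrate n m grp B \<rho> \<gamma> lam x y * f y)"
      by (rule sum.cong) (auto simp: S_def generator_def)
    finally show ?thesis by (simp add: generator_def)
  qed
  have T1: "(\<Sum>y\<in>S. (\<Sum>a<n. if dis x a = 0 \<and> y = set_dis x a 1 then r a else 0) * f y)
      = (\<Sum>a<n. if dis x a = 0 then r a * f (set_dis x a 1) else 0)"
  proof -
    have "(\<Sum>y\<in>S. (\<Sum>a<n. if dis x a = 0 \<and> y = set_dis x a 1 then r a else 0) * f y)
       = (\<Sum>a<n. \<Sum>y\<in>S. (if dis x a = 0 \<and> y = set_dis x a 1 then r a else 0) * f y)"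
      by (simp add: sum_distrib_right sum.swap[of _ S])
    also have "\<dots> = (\<Sum>a<n. if dis x a = 0 then r a * f (set_dis x a 1) else 0)"
      by (rule sum.cong[OF refl], rule sum_if_eq[OF finS]) (use x mem_set_dis[OF x, of _ 1] in \<open>auto simp: S_def\<close>)
    finally show ?thesis .
  qed
  have T2: "(\<Sum>y\<in>S. (\<Sum>a<n. if dis x a = 1 \<and> y = set_dis x a (-1) then \<gamma> (grp a) else 0) * f y)
      = (\<Sum>a<n. if dis x a = 1 then \<gamma> (grp a) * f (set_dis x a (-1)) else 0)"
  proof -
    have "(\<Sum>y\<in>S. (\<Sum>a<n. if dis x a = 1 \<and> y = set_dis x a (-1) then \<gamma> (grp a) else 0) * f y)
       = (\<Sum>a<n. \<Sum>y\<in>S. (if dis x a = 1 \<and> y = set_dis x a (-1) then \<gamma> (grp a) else 0) * f y)"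
      by (simp add: sum_distrib_right sum.swap[of _ S])
    also have "\<dots> = (\<Sum>a<n. if dis x a = 1 then \<gamma> (grp a) * f (set_dis x a (-1)) else 0)"
      by (rule sum.cong[OF refl], rule sum_if_eq[OF finS]) (use x mem_set_dis[OF x, of _ "-1"] in \<open>auto simp: S_def\<close>)
    finally show ?thesis .
  qed
  have T3: "(\<Sum>y\<in>S. (\<Sum>a<n. \<Sum>b<n. if a \<noteq> b then
          (if y = upd_edge x a b True then c1 a b else 0)
        + (if y = upd_edge x a b False then c2 a b else 0) else 0) * f y)
      = (\<Sum>a<n. \<Sum>b<n. if a \<noteq> b then (c1 a b + c2 a b) * f x else 0)"
  proof -
    have "(\<Sum>y\<in>S. (\<Sum>a<n. \<Sum>b<n. if a \<noteq> b then
          (if y = upd_edge x a b True then c1 a b else 0)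
        + (if y = upd_edge x a b False then c2 a b else 0) else 0) * f y)
      = (\<Sum>a<n. \<Sum>b<n. \<Sum>y\<in>S. (if a \<noteq> b \<and> y = upd_edge x a b True then c1 a b else 0) * f y
                               + (if a \<noteq> b \<and> y = upd_edge x a b False then c2 a b else 0) * f y)"
      (is "?L = ?R")
    proof -
      have "?L = (\<Sum>y\<in>S. \<Sum>a<n. \<Sum>b<n. (if a \<noteq> b then
          (if y = upd_edge x a b True then c1 a b else 0)
        + (if y = upd_edge x a b False then c2 a b else 0) else 0) * f y)"
        by (simp only: sum_distrib_right)
      also have "\<dots> = (\<Sum>a<n. \<Sum>y\<in>S. \<Sum>b<n. (if a \<noteq> b then
          (if y = upd_edge x a b True then c1 a b else 0)
        + (if y = upd_edge x a b False then c2 a b else 0) else 0) * f y)"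
        by (rule sum.swap)
      also have "\<dots> = (\<Sum>a<n. \<Sum>b<n. \<Sum>y\<in>S. (if a \<noteq> b then
          (if y = upd_edge x a b True then c1 a b else 0)
        + (if y = upd_edge x a b False then c2 a b else 0) else 0) * f y)"
        by (rule sum.cong[OF refl], rule sum.swap)
      also have "\<dots> = ?R"
        by (intro sum.cong refl) (auto simp: algebra_simps)
      finally show ?thesis .
    qed
    also have "\<dots> = (\<Sum>a<n. \<Sum>b<n. if a \<noteq> b then (c1 a b + c2 a b) * f x else 0)"
    proof (rule sum.cong[OF refl], rule sum.cong[OF refl])
      fix a b assume a: "a \<in> {..<n}" and b: "b \<in> {..<n}"
      have "(\<Sum>y\<in>S. (if a \<noteq> b \<and> y = upd_edge x a b True then c1 a b else 0) * f y
                               + (if a \<noteq> b \<and> y = upd_edge x a b False then c2 a b else 0) * f y)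
          = (if a \<noteq> b then c1 a b * f (upd_edge x a b True) else 0) + (if a \<noteq> b then c2 a b * f (upd_edge x a b False) else 0)"
        unfolding sum.distrib
        by (intro arg_cong2[where f="(+)"] sum_if_eq[OF finS]) (use x a b mem_upd_edge[OF x, of a b] in \<open>auto simp: S_def\<close>)
      then show "(\<Sum>y\<in>S. (if a \<noteq> b \<and> y = upd_edge x a b True then c1 a b else 0) * f y
                               + (if a \<noteq> b \<and> y = upd_edge x a b False then c2 a b else 0) * f y)
           = (if a \<noteq> b then (c1 a b + c2 a b) * f x else 0)"
        using finv[rule_format, of x a b True] finv[rule_format, of x a b False] by (simp add: algebra_simps)
    qed
    finally show ?thesis .
  qed
  have Q: "(\<Sum>y\<in>S. qrate n m grp B \<rho> \<gamma> lam x y * f y) =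
      (\<Sum>a<n. if dis x a = 0 then r a * f (set_dis x a 1) else 0)
    + (\<Sum>a<n. if dis x a = 1 then \<gamma> (grp a) * f (set_dis x a (-1)) else 0)
    + (\<Sum>a<n. \<Sum>b<n. if a \<noteq> b then (c1 a b + c2 a b) * f x else 0)"
    unfolding T1[symmetric] T2[symmetric] T3[symmetric] sum.distrib[symmetric]
    unfolding qrate_def r_def c1_def c2_def by (simp add: algebra_simps)
  have TT: "totrate n m grp B \<rho> \<gamma> lam x * f x =
      (\<Sum>a<n. if dis x a = 0 then r a * f x else 0)
    + (\<Sum>a<n. if dis x a = 1 then \<gamma> (grp a) * f x else 0)
    + (\<Sum>a<n. \<Sum>b<n. if a \<noteq> b then (c1 a b + c2 a b) * f x else 0)"
    unfolding totrate_def r_def c1_def c2_def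
    by (simp only: distrib_right sum_distrib_right if_mult)
  have E1: "(\<Sum>a<n. if dis x a = 0 then r a * (f (set_dis x a 1) - f x) else 0) =
     (\<Sum>a<n. if dis x a = 0 then r a * f (set_dis x a 1) else 0) - (\<Sum>a<n. if dis x a = 0 then r a * f x else 0)"
    unfolding sum_subtractf[symmetric] by (rule sum.cong) (auto simp: algebra_simps)
  have E2: "(\<Sum>a<n. if dis x a = 1 then \<gamma> (grp a) * (f (set_dis x a (-1)) - f x) else 0) =
     (\<Sum>a<n. if dis x a = 1 then \<gamma> (grp a) * f (set_dis x a (-1)) else 0) - (\<Sum>a<n. if dis x a = 1 then \<gamma> (grp a) * f x else 0)"
    unfolding sum_subtractf[symmetric] by (rule sum.cong) (auto simp: algebra_simps)
  show ?thesis unfolding r_def[symmetric] split Q E1 E2 using TT by linarith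
qed

lemma Sg_inf: "dis x a = 0 \<Longrightarrow> a < n \<Longrightarrow> Sg n grp i (set_dis x a 1) = Sg n grp i x - {a}"
  by (auto simp: Sg_def)
lemma Ig_inf: "dis x a = 0 \<Longrightarrow> a < n \<Longrightarrow> Ig n grp i (set_dis x a 1) = (if grp a = i then insert a (Ig n grp i x) else Ig n grp i x)"
  by (auto simp: Ig_def)
lemma Sg_rec: "dis x a = 1 \<Longrightarrow> Sg n grp i (set_dis x a (-1)) = Sg n grp i x"
  by (auto simp: Sg_def)
lemma Ig_rec: "dis x a = 1 \<Longrightarrow> Ig n grp i (set_dis x a (-1)) = Ig n grp i x - {a}"
  by (auto simp: Ig_def)
lemma Sg_fin[simp]: "finite (Sg n grp i x)" by (auto simp: Sg_def)
lemma Ig_fin[simp]: "finite (Ig n grp i x)" by (auto simp: Ig_def)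

lemma gen_psi:
  fixes \<psi> :: "real \<Rightarrow> real \<Rightarrow> real"
  assumes fin: "finite (states n)" and x: "x \<in> states n"
  shows "(\<Sum>y\<in>states n. generator n m grp B \<rho> \<gamma> lam x y *
            \<psi> (real (card (Sg n grp i y))) (real (card (Ig n grp i y)))) =
     (\<psi> (real (card (Sg n grp i x)) - 1) (real (card (Ig n grp i x)) + 1)
        - \<psi> (real (card (Sg n grp i x))) (real (card (Ig n grp i x))))
       * (\<Sum>k<m. B i k * (\<Sum>a\<in>Sg n grp i x. Eind n grp k a x))
   + (\<psi> (real (card (Sg n grp i x))) (real (card (Ig n grp i x)) - 1)
        - \<psi> (real (card (Sg n grp i x))) (real (card (Ig n grp i x))))
       * (\<gamma> i * real (card (Ig n grp i x)))"
proof -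
  define f where "f y = \<psi> (real (card (Sg n grp i y))) (real (card (Ig n grp i y)))" for y
  define cS where "cS = real (card (Sg n grp i x))"
  define cI where "cI = real (card (Ig n grp i x))"
  define D1 where "D1 = \<psi> (cS - 1) (cI + 1) - \<psi> cS cI"
  define D2 where "D2 = \<psi> cS (cI - 1) - \<psi> cS cI"
  have finv: "\<forall>x a b v. f (upd_edge x a b v) = f x"
    by (simp add: f_def Sg_def Ig_def)
  have inf: "(\<Sum>a<n. if dis x a = 0 then (\<Sum>k<m. B (grp a) k * Eind n grp k a x) * (f (set_dis x a 1) - f x) else 0)
      = D1 * (\<Sum>k<m. B i k * (\<Sum>a\<in>Sg n grp i x. Eind n grp k a x))"
  proof -
    have "(\<Sum>a<n. if dis x a = 0 then (\<Sum>k<m. B (grp a) k * Eind n grp k a x) * (f (set_dis x a 1) - f x) else 0)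
        = (\<Sum>a<n. if grp a = i \<and> dis x a = 0 then (\<Sum>k<m. B i k * Eind n grp k a x) * D1 else 0)"
    proof (rule sum.cong[OF refl])
      fix a assume a: "a \<in> {..<n}"
      show "(if dis x a = 0 then (\<Sum>k<m. B (grp a) k * Eind n grp k a x) * (f (set_dis x a 1) - f x) else 0)
          = (if grp a = i \<and> dis x a = 0 then (\<Sum>k<m. B i k * Eind n grp k a x) * D1 else 0)"
      proof (cases "dis x a = 0")
        case True
        show ?thesis
        proof (cases "grp a = i")
          case g: True
          have aS: "a \<in> Sg n grp i x" using a True g by (simp add: Sg_def)
          have aI: "a \<notin> Ig n grp i x" using True by (simp add: Ig_def)
          have "card (Sg n grp i x - {a}) = card (Sg n grp i x) - 1" using aS by simp
          moreover have "card (Sg n grp i x) \<ge> 1" using aS card_0_eq[of "Sg n grp i x"] by fastforce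
          ultimately have c1: "real (card (Sg n grp i x - {a})) = cS - 1" unfolding cS_def by simp
          have c2: "real (card (insert a (Ig n grp i x))) = cI + 1" using aI unfolding cI_def by simp
          show ?thesis using True g a
            by (simp add: f_def Sg_inf Ig_inf c1 c2 D1_def cS_def[symmetric] cI_def[symmetric])
        next
          case False
          have "Sg n grp i x - {a} = Sg n grp i x" using False by (auto simp: Sg_def)
          then show ?thesis using True False a by (simp add: f_def Sg_inf Ig_inf)
        qed
      qed simp
    qed
    also have "\<dots> = (\<Sum>a\<in>Sg n grp i x. (\<Sum>k<m. B i k * Eind n grp k a x) * D1)"
    proof -
      have "Sg n grp i x = {a\<in>{..<n}. grp a = i \<and> dis x a = 0}" by (auto simp: Sg_def)
      then show ?thesis by (simp only: sum.inter_filter[OF finite_lessThan])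
    qed
    also have "\<dots> = D1 * (\<Sum>k<m. B i k * (\<Sum>a\<in>Sg n grp i x. Eind n grp k a x))"
      by (simp add: sum_distrib_left sum_distrib_right mult_ac sum.swap[of _ "Sg n grp i x"])
    finally show ?thesis .
  qed
  have rec: "(\<Sum>a<n. if dis x a = 1 then \<gamma> (grp a) * (f (set_dis x a (-1)) - f x) else 0)
      = D2 * (\<gamma> i * cI)"
  proof -
    have "(\<Sum>a<n. if dis x a = 1 then \<gamma> (grp a) * (f (set_dis x a (-1)) - f x) else 0)
        = (\<Sum>a<n. if grp a = i \<and> dis x a = 1 then \<gamma> i * D2 else 0)"
    proof (rule sum.cong[OF refl])
      fix a assume a: "a \<in> {..<n}"
      show "(if dis x a = 1 then \<gamma> (grp a) * (f (set_dis x a (-1)) - f x) else 0)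
          = (if grp a = i \<and> dis x a = 1 then \<gamma> i * D2 else 0)"
      proof (cases "dis x a = 1")
        case True
        show ?thesis
        proof (cases "grp a = i")
          case g: True
          have aI: "a \<in> Ig n grp i x" using a True g by (simp add: Ig_def)
          have "card (Ig n grp i x - {a}) = card (Ig n grp i x) - 1" using aI by simp
          moreover have "card (Ig n grp i x) \<ge> 1" using aI card_0_eq[of "Ig n grp i x"] by fastforce
          ultimately have c1: "real (card (Ig n grp i x - {a})) = cI - 1" unfolding cI_def by simp
          show ?thesis using True g a
            by (simp add: f_def Sg_rec Ig_rec c1 D2_def cS_def[symmetric] cI_def[symmetric])
        next
          case False
          have "Ig n grp i x - {a} = Ig n grp i x" using False by (auto simp: Ig_def)
          then show ?thesis using True False a by (simp add: f_def Sg_rec Ig_rec)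
        qed
      qed simp
    qed
    also have "\<dots> = (\<Sum>a\<in>Ig n grp i x. \<gamma> i * D2)"
    proof -
      have "Ig n grp i x = {a\<in>{..<n}. grp a = i \<and> dis x a = 1}" by (auto simp: Ig_def)
      then show ?thesis by (simp only: sum.inter_filter[OF finite_lessThan])
    qed
    also have "\<dots> = D2 * (\<gamma> i * cI)" by (simp add: cI_def)
    finally show ?thesis .
  qed
  show ?thesis
    using gen_formula[OF fin x finv, of m grp B \<rho> \<gamma> lam] inf rec
    unfolding f_def D1_def D2_def cS_def cI_def by simp
qed



lemma cond_pp:
  fixes Y :: "'w \<Rightarrow> 's" and W :: "'s \<Rightarrow> 'z" and G :: "'s \<Rightarrow> real"
  assumes M: "prob_space M" and fin: "finite S" and YS: "\<forall>\<omega>\<in>space M. Y \<omega> \<in> S"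
    and meas: "\<And>v. {\<omega>\<in>space M. Y \<omega> = v} \<in> sets M"
    and Ginv: "\<And>x y. W x = W y \<Longrightarrow> G x = G y"
  shows "(\<Sum>x\<in>S. measure M {\<omega>\<in>space M. Y \<omega> = x} * G x *
            (measure M {\<omega>\<in>space M. E (Y \<omega>) \<and> W (Y \<omega>) = W x} / measure M {\<omega>\<in>space M. W (Y \<omega>) = W x}))
       = (\<Sum>x\<in>S. measure M {\<omega>\<in>space M. Y \<omega> = x} * G x * (if E x then 1 else 0))"
proof -
  define p where "p x = measure M {\<omega>\<in>space M. Y \<omega> = x}" for x
  define G' where "G' z = G (SOME x. W x = z)" for z
  have GG: "G x = G' (W x)" for x
  proof -
    have "W (SOME y. W y = W x) = W x" by (rule someI[of "\<lambda>y. W y = W x" x]) simp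
    then show ?thesis unfolding G'_def by (rule Ginv[symmetric])
  qed
  define A where "A z = {x\<in>S. W x = z}" for z
  define Nm where "Nm z = (\<Sum>x\<in>A z. (if E x then 1 else 0) * p x)" for z
  define Dn where "Dn z = (\<Sum>x\<in>A z. p x)" for z
  have p0: "0 \<le> p x" for x unfolding p_def by simp
  have finA: "finite (A z)" for z using fin unfolding A_def by simp
  have Num: "measure M {\<omega>\<in>space M. E (Y \<omega>) \<and> W (Y \<omega>) = z} = Nm z" for z
  proof -
    have "measure M {\<omega>\<in>space M. E (Y \<omega>) \<and> W (Y \<omega>) = z}
        = (\<Sum>v\<in>S. (if E v \<and> W v = z then 1 else 0) * p v)"
      unfolding p_def by (rule measure_as_sum[OF M fin YS meas, of "\<lambda>v. E v \<and> W v = z"])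
    also have "\<dots> = Nm z" unfolding Nm_def A_def sum.inter_filter[OF fin]
      by (rule sum.cong) auto
    finally show ?thesis .
  qed
  have Den: "measure M {\<omega>\<in>space M. W (Y \<omega>) = z} = Dn z" for z
  proof -
    have "measure M {\<omega>\<in>space M. W (Y \<omega>) = z}
        = (\<Sum>v\<in>S. (if W v = z then 1 else 0) * p v)"
      unfolding p_def by (rule measure_as_sum[OF M fin YS meas, of "\<lambda>v. W v = z"])
    also have "\<dots> = Dn z" unfolding Dn_def A_def sum.inter_filter[OF fin]
      by (rule sum.cong) auto
    finally show ?thesis .
  qed
  have ND: "Nm z / Dn z * Dn z = Nm z" for z
  proof (cases "Dn z = 0")
    case True
    have "Nm z \<le> Dn z" unfolding Nm_def Dn_def by (rule sum_mono) (simp add: p0)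
    moreover have "0 \<le> Nm z" unfolding Nm_def by (rule sum_nonneg) (simp add: p0)
    ultimately show ?thesis using True by simp
  qed simp
  have "(\<Sum>x\<in>S. p x * G x * (Nm (W x) / Dn (W x))) = (\<Sum>z\<in>W ` S. \<Sum>x\<in>A z. p x * G x * (Nm (W x) / Dn (W x)))"
    unfolding A_def by (rule sum.image_gen[OF fin])
  also have "\<dots> = (\<Sum>z\<in>W ` S. G' z * Nm z)"
  proof (rule sum.cong[OF refl])
    fix z
    have "(\<Sum>x\<in>A z. p x * G x * (Nm (W x) / Dn (W x))) = (\<Sum>x\<in>A z. G' z * (Nm z / Dn z) * p x)"
      by (rule sum.cong) (auto simp: A_def GG)
    also have "\<dots> = G' z * (Nm z / Dn z) * Dn z" unfolding Dn_def by (rule sum_distrib_left[symmetric])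
    finally show "(\<Sum>x\<in>A z. p x * G x * (Nm (W x) / Dn (W x))) = G' z * Nm z" by (simp only: mult.assoc ND)
  qed
  also have "\<dots> = (\<Sum>z\<in>W ` S. \<Sum>x\<in>A z. p x * G x * (if E x then 1 else 0))"
  proof (rule sum.cong[OF refl])
    fix z
    have "(\<Sum>x\<in>A z. p x * G x * (if E x then 1 else 0)) = (\<Sum>x\<in>A z. G' z * ((if E x then 1 else 0) * p x))"
      by (rule sum.cong) (auto simp: A_def GG)
    then show "G' z * Nm z = (\<Sum>x\<in>A z. p x * G x * (if E x then 1 else 0))"
      unfolding Nm_def by (simp add: sum_distrib_left)
  qed
  also have "\<dots> = (\<Sum>x\<in>S. p x * G x * (if E x then 1 else 0))"
    unfolding A_def by (rule sum.image_gen[OF fin, symmetric])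
  finally show ?thesis unfolding p_def Num Den .
qed



lemma sum2g: "finite A \<Longrightarrow> finite B \<Longrightarrow> S1 \<subseteq> A \<Longrightarrow> S2 \<subseteq> B \<Longrightarrow>
  (\<Sum>a\<in>S1. \<Sum>c\<in>S2. F a c) = (\<Sum>a\<in>A. \<Sum>c\<in>B. (if a \<in> S1 \<and> c \<in> S2 then 1 else 0) * (F a c :: real))"
proof -
  assume fA: "finite A" and fB: "finite B" and s1: "S1 \<subseteq> A" and s2: "S2 \<subseteq> B"
  have "(\<Sum>a\<in>S1. \<Sum>c\<in>S2. F a c) = (\<Sum>a\<in>S1. \<Sum>c\<in>B. (if a \<in> S1 \<and> c \<in> S2 then 1 else 0) * F a c)"
  proof (rule sum.cong[OF refl])
    fix a assume a: "a \<in> S1"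
    show "(\<Sum>c\<in>S2. F a c) = (\<Sum>c\<in>B. (if a \<in> S1 \<and> c \<in> S2 then 1 else 0) * F a c)"
      by (rule sum.mono_neutral_cong_left[OF fB s2]) (auto simp: a)
  qed
  also have "\<dots> = (\<Sum>a\<in>A. \<Sum>c\<in>B. (if a \<in> S1 \<and> c \<in> S2 then 1 else 0) * F a c)"
    by (rule sum.mono_neutral_left[OF fA s1]) auto
  finally show ?thesis .
qed

locale epi =
  fixes n m :: nat and grp :: "nat \<Rightarrow> nat"
    and B \<rho> :: "nat \<Rightarrow> nat \<Rightarrow> real" and \<gamma> :: "nat \<Rightarrow> real" and lam :: real
    and M :: "'w measure" and X :: "real \<Rightarrow> 'w \<Rightarrow> state"
    and chi :: "nat \<Rightarrow> nat \<Rightarrow> real \<Rightarrow> 'w \<Rightarrow> real"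
    and i :: nat and t :: real
  assumes chain: "ctmc M X (states n) (generator n m grp B \<rho> \<gamma> lam)"
    and chi: "\<forall>i<m. \<forall>j<m. \<forall>t\<ge>0. \<forall>\<omega>\<in>space M. \<forall>a b.
                 a \<in> Sg n grp i (X t \<omega>) \<and> b \<in> Ig n grp j (X t \<omega>) \<longrightarrow>
                 chi i j t \<omega> = cond_edge M X n t a b \<omega>"
    and i: "i < m" and t: "0 \<le> t" and n: "0 < n"
begin

lemma M: "prob_space M" and fin: "finite (states n)" and meas: "\<forall>t\<ge>0. X t \<in> measurable M (count_space UNIV)"
  and XS: "\<forall>t\<ge>0. \<forall>\<omega>\<in>space M. X t \<omega> \<in> states n"
  using chain unfolding ctmc_def by blast+
definition SS where "SS = states n"
definition pt where "pt x = measure M {\<omega>\<in>space M. X t \<omega> = x}"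
lemma ms: "{\<omega>\<in>space M. A (X t \<omega>)} \<in> sets M" for A
proof -
  have "{\<omega>\<in>space M. A (X t \<omega>)} = X t -` {x. A x} \<inter> space M" by auto
  then show ?thesis using measurable_sets[of "X t" M "count_space UNIV" "{x. A x}"] meas t by auto
qed
lemma msv: "{\<omega>\<in>space M. X t \<omega> = v} \<in> sets M" for v using ms[of "\<lambda>y. y = v"] by simp
lemma XtS: "\<forall>\<omega>\<in>space M. X t \<omega> \<in> SS" using XS t unfolding SS_def by auto
lemma finS: "finite SS" using fin unfolding SS_def .
lemma g: "(LINT \<omega>|M. F (X t \<omega>)) = (\<Sum>x\<in>SS. F x * pt x)" for F
  unfolding pt_def by (rule simple_integral[OF M finS XtS]) (use ms in auto)
definition W where "W x = (Sall n x, Iall n x)"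
definition CE where "CE a c x = measure M {\<omega>\<in>space M. edge (X t \<omega>) a c \<and> W (X t \<omega>) = W x}
    / measure M {\<omega>\<in>space M. W (X t \<omega>) = W x}"
lemma cond: "cond_edge M X n t a c \<omega> = CE a c (X t \<omega>)" for a c \<omega>
  by (simp add: cond_edge_def CE_def W_def)
definition N where "N k x = (\<Sum>a\<in>Sg n grp i x. Eind n grp k a x)"
definition C where "C k x = (\<Sum>a\<in>Sg n grp i x. \<Sum>c\<in>Ig n grp k x. CE a c x)"
definition cS where "cS x = real (card (Sg n grp i x))"
definition cI where "cI x = real (card (Ig n grp i x))"
lemma Sg_Sall: "Sg n grp k x = {a\<in>Sall n x. grp a = k}" for k x by (auto simp: Sg_def Sall_def)
lemma Ig_Iall: "Ig n grp k x = {a\<in>Iall n x. grp a = k}" for k x by (auto simp: Ig_def Iall_def)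
lemma Winv: "Sg n grp k x = Sg n grp k y \<and> Ig n grp k x = Ig n grp k y" if "W x = W y" for k x y
  using that unfolding Sg_Sall Ig_Iall W_def by simp
lemma sfrac_eq: "sfrac n grp i x = cS x / real n" for x by (simp add: sfrac_def cS_def)
lemma bfrac_eq: "bfrac n grp i x = cI x / real n" for x by (simp add: bfrac_def cI_def)
lemma CHI: "real n * chi i j t \<omega> * sfrac n grp i (X t \<omega>) * bfrac n grp j (X t \<omega>) = C j (X t \<omega>) / real n"
  if j: "j < m" and w: "\<omega> \<in> space M" for j \<omega>
proof (cases "Sg n grp i (X t \<omega>) = {} \<or> Ig n grp j (X t \<omega>) = {}")
  case True
  then show ?thesis by (auto simp: C_def sfrac_def bfrac_def)
next
  case False
  have ce: "CE a c (X t \<omega>) = chi i j t \<omega>" if "a \<in> Sg n grp i (X t \<omega>)" "c \<in> Ig n grp j (X t \<omega>)" for a c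
    using chi[rule_format, of i j t \<omega> a c] i j t w that cond[of a c \<omega>] by auto
  have "C j (X t \<omega>) = (\<Sum>a\<in>Sg n grp i (X t \<omega>). \<Sum>c\<in>Ig n grp j (X t \<omega>). chi i j t \<omega>)"
    unfolding C_def by (intro sum.cong refl) (simp add: ce)
  also have "\<dots> = real (card (Sg n grp i (X t \<omega>))) * real (card (Ig n grp j (X t \<omega>))) * chi i j t \<omega>"
    by simp
  finally show ?thesis using n by (simp add: sfrac_def bfrac_def field_simps)
qed
lemma sum2: "(\<Sum>a\<in>Sg n grp i x. \<Sum>c\<in>Ig n grp k x. F a c) =
    (\<Sum>a<n. \<Sum>c<n. (if a \<in> Sg n grp i x \<and> c \<in> Ig n grp k x then 1 else 0) * F a c)" for x k and F :: "nat \<Rightarrow> nat \<Rightarrow> real"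
  by (rule sum2g) (auto simp: Sg_def Ig_def)
lemma CL: "(\<Sum>x\<in>SS. pt x * h x * N k x) = (\<Sum>x\<in>SS. pt x * h x * C k x)"
  if hinv: "\<And>x y. W x = W y \<Longrightarrow> h x = h y" for k h
proof -
  define ind where "ind a c x = (if a \<in> Sg n grp i x \<and> c \<in> Ig n grp k x then 1 else 0 :: real)" for a c x
  have Nx: "N k x = (\<Sum>a<n. \<Sum>c<n. ind a c x * (if edge x a c then 1 else 0))" for x
    unfolding N_def Eind_def ind_def by (rule sum2)
  have Cx: "C k x = (\<Sum>a<n. \<Sum>c<n. ind a c x * CE a c x)" for x
    unfolding C_def ind_def by (rule sum2)
  have swap: "(\<Sum>x\<in>SS. pt x * h x * (\<Sum>a<n. \<Sum>c<n. ind a c x * F a c x)) =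
      (\<Sum>a<n. \<Sum>c<n. \<Sum>x\<in>SS. pt x * (h x * ind a c x) * F a c x)" for F :: "nat \<Rightarrow> nat \<Rightarrow> state \<Rightarrow> real"
  proof -
    have "(\<Sum>x\<in>SS. pt x * h x * (\<Sum>a<n. \<Sum>c<n. ind a c x * F a c x)) =
        (\<Sum>x\<in>SS. \<Sum>a<n. \<Sum>c<n. pt x * (h x * ind a c x) * F a c x)"
      by (simp add: sum_distrib_left mult_ac)
    also have "\<dots> = (\<Sum>a<n. \<Sum>x\<in>SS. \<Sum>c<n. pt x * (h x * ind a c x) * F a c x)"
      by (rule sum.swap)
    also have "\<dots> = (\<Sum>a<n. \<Sum>c<n. \<Sum>x\<in>SS. pt x * (h x * ind a c x) * F a c x)"
      by (rule sum.cong[OF refl], rule sum.swap)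
    finally show ?thesis .
  qed
  have "(\<Sum>x\<in>SS. pt x * h x * N k x) = (\<Sum>a<n. \<Sum>c<n. \<Sum>x\<in>SS. pt x * (h x * ind a c x) * (if edge x a c then 1 else 0))"
    unfolding Nx by (rule swap)
  also have "\<dots> = (\<Sum>a<n. \<Sum>c<n. \<Sum>x\<in>SS. pt x * (h x * ind a c x) * CE a c x)"
  proof (rule sum.cong[OF refl], rule sum.cong[OF refl])
    fix a c
    have inv: "h x * ind a c x = h y * ind a c y" if "W x = W y" for x y
      using hinv[OF that] Winv[OF that, of i] Winv[OF that, of k] unfolding ind_def by simp
    show "(\<Sum>x\<in>SS. pt x * (h x * ind a c x) * (if edge x a c then 1 else 0)) =
          (\<Sum>x\<in>SS. pt x * (h x * ind a c x) * CE a c x)"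
      using cond_pp[where E="\<lambda>x. edge x a c" and W=W, OF M finS XtS msv inv]
      unfolding pt_def CE_def by simp
  qed
  also have "\<dots> = (\<Sum>x\<in>SS. pt x * h x * C k x)"
    unfolding Cx by (rule swap[symmetric])
  finally show ?thesis .
qed
lemma master: "((\<lambda>\<tau>. LINT \<omega>|M. \<psi> (cS (X \<tau> \<omega>)) (cI (X \<tau> \<omega>))) has_real_derivative
    (\<Sum>k<m. B i k * (\<Sum>x\<in>SS. pt x * (\<psi> (cS x - 1) (cI x + 1) - \<psi> (cS x) (cI x)) * C k x))
    + \<gamma> i * (\<Sum>x\<in>SS. pt x * (\<psi> (cS x) (cI x - 1) - \<psi> (cS x) (cI x)) * cI x)) (at t within {0..})"
  for \<psi> :: "real \<Rightarrow> real \<Rightarrow> real"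
proof -
  define D1 where "D1 x = \<psi> (cS x - 1) (cI x + 1) - \<psi> (cS x) (cI x)" for x
  define D2 where "D2 x = \<psi> (cS x) (cI x - 1) - \<psi> (cS x) (cI x)" for x
  have D1inv: "D1 x = D1 y" if "W x = W y" for x y
    using Winv[OF that, of i] unfolding D1_def cS_def cI_def by simp
  have K: "((\<lambda>\<tau>. LINT \<omega>|M. \<psi> (cS (X \<tau> \<omega>)) (cI (X \<tau> \<omega>))) has_real_derivative
      (LINT \<omega>|M. (\<Sum>y\<in>states n. generator n m grp B \<rho> \<gamma> lam (X t \<omega>) y * \<psi> (cS y) (cI y)))) (at t within {0..})"
    by (rule kolmo[OF chain t])
  have "(LINT \<omega>|M. (\<Sum>y\<in>states n. generator n m grp B \<rho> \<gamma> lam (X t \<omega>) y * \<psi> (cS y) (cI y)))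
      = (\<Sum>x\<in>SS. (\<Sum>y\<in>states n. generator n m grp B \<rho> \<gamma> lam x y * \<psi> (cS y) (cI y)) * pt x)"
    by (rule g)
  also have "\<dots> = (\<Sum>x\<in>SS. (D1 x * (\<Sum>k<m. B i k * N k x) + D2 x * (\<gamma> i * cI x)) * pt x)"
  proof (rule sum.cong[OF refl])
    fix x assume x: "x \<in> SS"
    show "(\<Sum>y\<in>states n. generator n m grp B \<rho> \<gamma> lam x y * \<psi> (cS y) (cI y)) * pt x =
        (D1 x * (\<Sum>k<m. B i k * N k x) + D2 x * (\<gamma> i * cI x)) * pt x"
      using gen_psi[OF fin x[unfolded SS_def], of m grp B \<rho> \<gamma> lam \<psi> i]
      unfolding D1_def D2_def cS_def cI_def N_def by simp
  qed
  also have "\<dots> = (\<Sum>k<m. B i k * (\<Sum>x\<in>SS. pt x * D1 x * N k x)) + \<gamma> i * (\<Sum>x\<in>SS. pt x * D2 x * cI x)"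
  proof -
    have "(\<Sum>x\<in>SS. (D1 x * (\<Sum>k<m. B i k * N k x) + D2 x * (\<gamma> i * cI x)) * pt x)
        = (\<Sum>x\<in>SS. (\<Sum>k<m. B i k * (pt x * D1 x * N k x)) + \<gamma> i * (pt x * D2 x * cI x))"
      by (rule sum.cong[OF refl]) (simp add: sum_distrib_left sum_distrib_right algebra_simps)
    also have "\<dots> = (\<Sum>x\<in>SS. \<Sum>k<m. B i k * (pt x * D1 x * N k x)) + (\<Sum>x\<in>SS. \<gamma> i * (pt x * D2 x * cI x))"
      by (rule sum.distrib)
    also have "(\<Sum>x\<in>SS. \<Sum>k<m. B i k * (pt x * D1 x * N k x)) = (\<Sum>k<m. \<Sum>x\<in>SS. B i k * (pt x * D1 x * N k x))"
      by (rule sum.swap)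
    finally show ?thesis by (simp only: sum_distrib_left)
  qed
  also have "\<dots> = (\<Sum>k<m. B i k * (\<Sum>x\<in>SS. pt x * D1 x * C k x)) + \<gamma> i * (\<Sum>x\<in>SS. pt x * D2 x * cI x)"
    using CL[OF D1inv] by simp
  finally show ?thesis using K unfolding D1_def D2_def by simp
qed
lemma nz: "real n \<noteq> 0" using n by simp
definition I1 where "I1 j = (\<Sum>x\<in>SS. C j x / real n * pt x)"
definition I2 where "I2 j = (\<Sum>x\<in>SS. C j x / real n * sfrac n grp i x * pt x)"
definition I3 where "I3 j = (\<Sum>x\<in>SS. C j x / real n * bfrac n grp i x * pt x)"
lemma INT1: "(LINT \<omega>|M. real n * chi i j t \<omega> * sfrac n grp i (X t \<omega>) * bfrac n grp j (X t \<omega>)) = I1 j"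
  if j: "j < m" for j
proof -
  have "(LINT \<omega>|M. real n * chi i j t \<omega> * sfrac n grp i (X t \<omega>) * bfrac n grp j (X t \<omega>))
      = (LINT \<omega>|M. C j (X t \<omega>) / real n)"
    by (rule Bochner_Integration.integral_cong[OF refl]) (simp add: CHI[OF j])
  also have "\<dots> = I1 j" unfolding I1_def using g[of "\<lambda>x. C j x / real n"] by simp
  finally show ?thesis .
qed
lemma INT2: "(LINT \<omega>|M. real n * chi i j t \<omega> * (sfrac n grp i (X t \<omega>))\<^sup>2 * bfrac n grp j (X t \<omega>)) = I2 j"
  if j: "j < m" for j
proof -
  have "(LINT \<omega>|M. real n * chi i j t \<omega> * (sfrac n grp i (X t \<omega>))\<^sup>2 * bfrac n grp j (X t \<omega>))
      = (LINT \<omega>|M. C j (X t \<omega>) / real n * sfrac n grp i (X t \<omega>))"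
  proof (rule Bochner_Integration.integral_cong[OF refl])
    fix \<omega> assume w: "\<omega> \<in> space M"
    have "real n * chi i j t \<omega> * (sfrac n grp i (X t \<omega>))\<^sup>2 * bfrac n grp j (X t \<omega>)
        = (real n * chi i j t \<omega> * sfrac n grp i (X t \<omega>) * bfrac n grp j (X t \<omega>)) * sfrac n grp i (X t \<omega>)"
      by (simp add: power2_eq_square mult_ac)
    then show "real n * chi i j t \<omega> * (sfrac n grp i (X t \<omega>))\<^sup>2 * bfrac n grp j (X t \<omega>)
        = C j (X t \<omega>) / real n * sfrac n grp i (X t \<omega>)" by (simp only: CHI[OF j w])
  qed
  also have "\<dots> = I2 j" unfolding I2_def using g[of "\<lambda>x. C j x / real n * sfrac n grp i x"] by simp
  finally show ?thesis .
qed
lemma INT3: "(LINT \<omega>|M. real n * chi i j t \<omega> * sfrac n grp i (X t \<omega>) * bfrac n grp j (X t \<omega>) * bfrac n grp i (X t \<omega>)) = I3 j"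
  if j: "j < m" for j
proof -
  have "(LINT \<omega>|M. real n * chi i j t \<omega> * sfrac n grp i (X t \<omega>) * bfrac n grp j (X t \<omega>) * bfrac n grp i (X t \<omega>))
      = (LINT \<omega>|M. C j (X t \<omega>) / real n * bfrac n grp i (X t \<omega>))"
    by (rule Bochner_Integration.integral_cong[OF refl]) (simp add: CHI[OF j])
  also have "\<dots> = I3 j" unfolding I3_def using g[of "\<lambda>x. C j x / real n * bfrac n grp i x"] by simp
  finally show ?thesis .
qed
lemma Ib: "(LINT \<omega>|M. bfrac n grp i (X t \<omega>)) = (\<Sum>x\<in>SS. bfrac n grp i x * pt x)"
  by (rule g)
lemma Ib2: "(LINT \<omega>|M. (bfrac n grp i (X t \<omega>))\<^sup>2) = (\<Sum>x\<in>SS. (bfrac n grp i x)\<^sup>2 * pt x)"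
  using g[of "\<lambda>x. (bfrac n grp i x)\<^sup>2"] by simp
lemma S1: "(\<Sum>j<m. B i j * (LINT \<omega>|M. real n * chi i j t \<omega> * sfrac n grp i (X t \<omega>) * bfrac n grp j (X t \<omega>)))
    = (\<Sum>j<m. B i j * I1 j)"
  by (rule sum.cong[OF refl]) (simp add: INT1)
lemma S3: "(\<Sum>j<m. 2 * B i j * (LINT \<omega>|M. real n * chi i j t \<omega> * (sfrac n grp i (X t \<omega>))\<^sup>2 * bfrac n grp j (X t \<omega>))
               - B i j * (LINT \<omega>|M. real n * chi i j t \<omega> * sfrac n grp i (X t \<omega>) * bfrac n grp j (X t \<omega>)) / real n)
    = (\<Sum>j<m. 2 * B i j * I2 j - B i j * I1 j / real n)"
  by (rule sum.cong[OF refl]) (simp add: INT1 INT2)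
lemma S4: "(\<Sum>j<m. B i j * (2 * (LINT \<omega>|M. real n * chi i j t \<omega> * sfrac n grp i (X t \<omega>) * bfrac n grp j (X t \<omega>) * bfrac n grp i (X t \<omega>))
               + (LINT \<omega>|M. real n * chi i j t \<omega> * sfrac n grp i (X t \<omega>) * bfrac n grp j (X t \<omega>)) / real n))
    = (\<Sum>j<m. B i j * (2 * I3 j + I1 j / real n))"
  by (rule sum.cong[OF refl]) (simp add: INT1 INT3)
lemma item1: "((\<lambda>\<tau>. LINT \<omega>|M. sfrac n grp i (X \<tau> \<omega>)) has_real_derivative
     - (\<Sum>j<m. B i j * (LINT \<omega>|M. real n * chi i j t \<omega> * sfrac n grp i (X t \<omega>) * bfrac n grp j (X t \<omega>))))
     (at t within {0..})"
proof -
  have e: "(\<lambda>\<tau>. LINT \<omega>|M. sfrac n grp i (X \<tau> \<omega>)) = (\<lambda>\<tau>. LINT \<omega>|M. cS (X \<tau> \<omega>) / real n)"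
    by (simp add: sfrac_eq)
  have in1: "(\<Sum>x\<in>SS. pt x * ((cS x - 1) / real n - cS x / real n) * C k x) = - I1 k" for k
    unfolding I1_def sum_negf[symmetric] by (rule sum.cong[OF refl]) (use nz in \<open>simp add: field_simps\<close>)
  have v: "(\<Sum>k<m. B i k * (\<Sum>x\<in>SS. pt x * ((cS x - 1) / real n - cS x / real n) * C k x))
    + \<gamma> i * (\<Sum>x\<in>SS. pt x * (cS x / real n - cS x / real n) * cI x)
    = - (\<Sum>j<m. B i j * (LINT \<omega>|M. real n * chi i j t \<omega> * sfrac n grp i (X t \<omega>) * bfrac n grp j (X t \<omega>)))"
    unfolding S1 in1 by (simp add: sum_negf)
  show ?thesis using master[of "\<lambda>s b. s / real n"] unfolding e v .
qed
lemma item2: "((\<lambda>\<tau>. LINT \<omega>|M. bfrac n grp i (X \<tau> \<omega>)) has_real_derivative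
     (\<Sum>j<m. B i j * (LINT \<omega>|M. real n * chi i j t \<omega> * sfrac n grp i (X t \<omega>) * bfrac n grp j (X t \<omega>)))
     - \<gamma> i * (LINT \<omega>|M. bfrac n grp i (X t \<omega>)))
     (at t within {0..})"
proof -
  have e: "(\<lambda>\<tau>. LINT \<omega>|M. bfrac n grp i (X \<tau> \<omega>)) = (\<lambda>\<tau>. LINT \<omega>|M. cI (X \<tau> \<omega>) / real n)"
    by (simp add: bfrac_eq)
  have in1: "(\<Sum>x\<in>SS. pt x * ((cI x + 1) / real n - cI x / real n) * C k x) = I1 k" for k
    unfolding I1_def by (rule sum.cong[OF refl]) (use nz in \<open>simp add: field_simps\<close>)
  have in2: "(\<Sum>x\<in>SS. pt x * ((cI x - 1) / real n - cI x / real n) * cI x) = - (\<Sum>x\<in>SS. bfrac n grp i x * pt x)"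
    unfolding sum_negf[symmetric] by (rule sum.cong[OF refl]) (use nz in \<open>simp add: bfrac_eq field_simps\<close>)
  have v: "(\<Sum>k<m. B i k * (\<Sum>x\<in>SS. pt x * ((cI x + 1) / real n - cI x / real n) * C k x))
    + \<gamma> i * (\<Sum>x\<in>SS. pt x * ((cI x - 1) / real n - cI x / real n) * cI x)
    = (\<Sum>j<m. B i j * (LINT \<omega>|M. real n * chi i j t \<omega> * sfrac n grp i (X t \<omega>) * bfrac n grp j (X t \<omega>)))
     - \<gamma> i * (LINT \<omega>|M. bfrac n grp i (X t \<omega>))"
    unfolding S1 in1 in2 Ib by simp
  show ?thesis using master[of "\<lambda>s b. b / real n"] unfolding e v .
qed
lemma item3: "((\<lambda>\<tau>. LINT \<omega>|M. (sfrac n grp i (X \<tau> \<omega>))\<^sup>2) has_real_derivative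
     - (\<Sum>j<m. 2 * B i j * (LINT \<omega>|M. real n * chi i j t \<omega> * (sfrac n grp i (X t \<omega>))\<^sup>2 * bfrac n grp j (X t \<omega>))
               - B i j * (LINT \<omega>|M. real n * chi i j t \<omega> * sfrac n grp i (X t \<omega>) * bfrac n grp j (X t \<omega>)) / real n))
     (at t within {0..})"
proof -
  have e: "(\<lambda>\<tau>. LINT \<omega>|M. (sfrac n grp i (X \<tau> \<omega>))\<^sup>2) = (\<lambda>\<tau>. LINT \<omega>|M. (cS (X \<tau> \<omega>) / real n)\<^sup>2)"
    by (simp add: sfrac_eq)
  have in1: "(\<Sum>x\<in>SS. pt x * (((cS x - 1) / real n)\<^sup>2 - (cS x / real n)\<^sup>2) * C k x) = - (2 * I2 k - I1 k / real n)" for k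
    unfolding I1_def I2_def sum_distrib_left sum_divide_distrib sum_subtractf[symmetric] sum_negf[symmetric]
    by (rule sum.cong[OF refl]) (use nz in \<open>simp add: sfrac_eq field_simps power2_eq_square\<close>)
  have v: "(\<Sum>k<m. B i k * (\<Sum>x\<in>SS. pt x * (((cS x - 1) / real n)\<^sup>2 - (cS x / real n)\<^sup>2) * C k x))
    + \<gamma> i * (\<Sum>x\<in>SS. pt x * ((cS x / real n)\<^sup>2 - (cS x / real n)\<^sup>2) * cI x)
    = - (\<Sum>j<m. 2 * B i j * (LINT \<omega>|M. real n * chi i j t \<omega> * (sfrac n grp i (X t \<omega>))\<^sup>2 * bfrac n grp j (X t \<omega>))
               - B i j * (LINT \<omega>|M. real n * chi i j t \<omega> * sfrac n grp i (X t \<omega>) * bfrac n grp j (X t \<omega>)) / real n)"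
    unfolding S3 in1 sum_negf[symmetric] by (simp, rule sum.cong[OF refl]) (simp add: algebra_simps)
  show ?thesis using master[of "\<lambda>s b. (s / real n)\<^sup>2"] unfolding e v .
qed
lemma item4: "((\<lambda>\<tau>. LINT \<omega>|M. (bfrac n grp i (X \<tau> \<omega>))\<^sup>2) has_real_derivative
     (\<Sum>j<m. B i j * (2 * (LINT \<omega>|M. real n * chi i j t \<omega> * sfrac n grp i (X t \<omega>) * bfrac n grp j (X t \<omega>) * bfrac n grp i (X t \<omega>))
               + (LINT \<omega>|M. real n * chi i j t \<omega> * sfrac n grp i (X t \<omega>) * bfrac n grp j (X t \<omega>)) / real n))
     - \<gamma> i * (2 * (LINT \<omega>|M. (bfrac n grp i (X t \<omega>))\<^sup>2) - (LINT \<omega>|M. bfrac n grp i (X t \<omega>)) / real n))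
     (at t within {0..})"
proof -
  have e: "(\<lambda>\<tau>. LINT \<omega>|M. (bfrac n grp i (X \<tau> \<omega>))\<^sup>2) = (\<lambda>\<tau>. LINT \<omega>|M. (cI (X \<tau> \<omega>) / real n)\<^sup>2)"
    by (simp add: bfrac_eq)
  have in1: "(\<Sum>x\<in>SS. pt x * (((cI x + 1) / real n)\<^sup>2 - (cI x / real n)\<^sup>2) * C k x) = 2 * I3 k + I1 k / real n" for k
    unfolding I1_def I3_def sum_distrib_left sum_divide_distrib sum.distrib[symmetric]
    by (rule sum.cong[OF refl]) (use nz in \<open>simp add: bfrac_eq field_simps power2_eq_square\<close>)
  have in2: "(\<Sum>x\<in>SS. pt x * (((cI x - 1) / real n)\<^sup>2 - (cI x / real n)\<^sup>2) * cI x)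
      = - (2 * (\<Sum>x\<in>SS. (bfrac n grp i x)\<^sup>2 * pt x) - (\<Sum>x\<in>SS. bfrac n grp i x * pt x) / real n)"
    unfolding sum_distrib_left sum_divide_distrib sum_subtractf[symmetric] sum_negf[symmetric]
    by (rule sum.cong[OF refl]) (use nz in \<open>simp add: bfrac_eq field_simps power2_eq_square\<close>)
  have v: "(\<Sum>k<m. B i k * (\<Sum>x\<in>SS. pt x * (((cI x + 1) / real n)\<^sup>2 - (cI x / real n)\<^sup>2) * C k x))
    + \<gamma> i * (\<Sum>x\<in>SS. pt x * (((cI x - 1) / real n)\<^sup>2 - (cI x / real n)\<^sup>2) * cI x)
    = (\<Sum>j<m. B i j * (2 * (LINT \<omega>|M. real n * chi i j t \<omega> * sfrac n grp i (X t \<omega>) * bfrac n grp j (X t \<omega>) * bfrac n grp i (X t \<omega>))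
               + (LINT \<omega>|M. real n * chi i j t \<omega> * sfrac n grp i (X t \<omega>) * bfrac n grp j (X t \<omega>)) / real n))
     - \<gamma> i * (2 * (LINT \<omega>|M. (bfrac n grp i (X t \<omega>))\<^sup>2) - (LINT \<omega>|M. bfrac n grp i (X t \<omega>)) / real n)"
    unfolding S4 in1 in2 Ib Ib2 by (simp add: algebra_simps)
  show ?thesis using master[of "\<lambda>s b. (b / real n)\<^sup>2"] unfolding e v .
qed
end

theorem proposition1:
  fixes n m :: nat and grp :: "nat \<Rightarrow> nat"
    and B \<rho> :: "nat \<Rightarrow> nat \<Rightarrow> real" and \<gamma> :: "nat \<Rightarrow> real" and lam :: real
    and M :: "'w measure" and X :: "real \<Rightarrow> 'w \<Rightarrow> state"
    and chi :: "nat \<Rightarrow> nat \<Rightarrow> real \<Rightarrow> 'w \<Rightarrow> real"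
    and i :: nat and t :: real
  assumes grp: "\<forall>a<n. grp a < m"
    and B: "\<forall>i<m. \<forall>j<m. 0 \<le> B i j"
    and rho: "\<forall>i<m. \<forall>j<m. 0 < \<rho> i j \<and> \<rho> i j / real n \<le> 1"
    and gam: "\<forall>i<m. 0 < \<gamma> i"
    and lam: "0 < lam"
    and chain: "ctmc M X (states n) (generator n m grp B \<rho> \<gamma> lam)"
    and chi: "\<forall>i<m. \<forall>j<m. \<forall>t\<ge>0. \<forall>\<omega>\<in>space M. \<forall>a b.
                 a \<in> Sg n grp i (X t \<omega>) \<and> b \<in> Ig n grp j (X t \<omega>) \<longrightarrow>
                 chi i j t \<omega> = cond_edge M X n t a b \<omega>"
    and i: "i < m" and t: "0 \<le> t"
  shows
   "((\<lambda>\<tau>. LINT \<omega>|M. sfrac n grp i (X \<tau> \<omega>)) has_real_derivative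
       - (\<Sum>j<m. B i j * (LINT \<omega>|M. real n * chi i j t \<omega> * sfrac n grp i (X t \<omega>) * bfrac n grp j (X t \<omega>))))
       (at t within {0..})
  \<and> ((\<lambda>\<tau>. LINT \<omega>|M. bfrac n grp i (X \<tau> \<omega>)) has_real_derivative
       (\<Sum>j<m. B i j * (LINT \<omega>|M. real n * chi i j t \<omega> * sfrac n grp i (X t \<omega>) * bfrac n grp j (X t \<omega>)))
       - \<gamma> i * (LINT \<omega>|M. bfrac n grp i (X t \<omega>)))
       (at t within {0..})
  \<and> ((\<lambda>\<tau>. LINT \<omega>|M. (sfrac n grp i (X \<tau> \<omega>))\<^sup>2) has_real_derivative
       - (\<Sum>j<m. 2 * B i j * (LINT \<omega>|M. real n * chi i j t \<omega> * (sfrac n grp i (X t \<omega>))\<^sup>2 * bfrac n grp j (X t \<omega>))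
                 - B i j * (LINT \<omega>|M. real n * chi i j t \<omega> * sfrac n grp i (X t \<omega>) * bfrac n grp j (X t \<omega>)) / real n))
       (at t within {0..})
  \<and> ((\<lambda>\<tau>. LINT \<omega>|M. (bfrac n grp i (X \<tau> \<omega>))\<^sup>2) has_real_derivative
       (\<Sum>j<m. B i j * (2 * (LINT \<omega>|M. real n * chi i j t \<omega> * sfrac n grp i (X t \<omega>) * bfrac n grp j (X t \<omega>) * bfrac n grp i (X t \<omega>))
                 + (LINT \<omega>|M. real n * chi i j t \<omega> * sfrac n grp i (X t \<omega>) * bfrac n grp j (X t \<omega>)) / real n))
       - \<gamma> i * (2 * (LINT \<omega>|M. (bfrac n grp i (X t \<omega>))\<^sup>2) - (LINT \<omega>|M. bfrac n grp i (X t \<omega>)) / real n))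
       (at t within {0..})"
proof (cases "n = 0")
  case True
  then have s0: "\<And>x. sfrac n grp i x = 0" "\<And>j x. bfrac n grp j x = 0" by (simp_all add: sfrac_def bfrac_def)
  show ?thesis unfolding s0 by simp
next
  case False
  have "epi n m grp B \<rho> \<gamma> lam M X chi i t"
    unfolding epi_def using chain chi i t False by auto
  then interpret epi n m grp B \<rho> \<gamma> lam M X chi i t .
  show ?thesis using item1 item2 item3 item4 by blast
qed


end
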